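(* Each of the functions $\theta\mapsto\mathbf{u}'(\theta)\cdot\mathbf{u}(\theta)$ and $\theta\mapsto\mathbf{v}'(\theta)\cdot\mathbf{v}(\theta)$ is either strictly positive on all of $(\theta^-,\theta^+)$ or strictly negative on all of $(\theta^-,\theta^+)$. Consequently $|\mathbf{u}(\theta)|$ and $|\mathbf{v}(\theta)|$ are strictly monotonic on $(\theta^-,\theta^+)$.
   Context: Design and mechanism parameterization. Fix $\mathbf{t}_1^r,\dots,\mathbf{t}_4^r\in\mathbb{R}^3$ with $\mathbf{t}_i^r\cdot(\mathbf{t}_j^r\times\mathbf{t}_k^r)\neq0$ for $ijk\in\{123,234,341,412\}$, $\mathrm{conv}\{\mathbf{0},\mathbf{t}_1^r,\mathbf{t}_2^r\}\cap\mathrm{conv}\{\mathbf{0},\mathbf{t}_3^r,\mathbf{t}_4^r\}=\{\mathbf{0}\}$, $\mathrm{conv}\{\mathbf{0},\mathbf{t}_1^r,\mathbf{t}_4^r\}\cap\mathrm{conv}\{\mathbf{0},\mathbf{t}_2^r,\mathbf{t}_3^r\}=\{\mathbf{0}\}$, and $\mathbf{u}_0:=\mathbf{t}_1^r-\mathbf{t}_3^r$, $\mathbf{v}_0:=\mathbf{t}_2^r-\mathbf{t}_4^r$ with $\mathbf{u}_0\cdot\mathbf{e}_3=\mathbf{v}_0\cdot\mathbf{e}_3=0$, $\mathbf{e}_3\cdot(\mathbf{u}_0\times\mathbf{v}_0)>0$. For nonzero $\mathbf{t}$ let $\mathbf{R}_{\mathbf{t}}(\varphi):=|\mathbf{t}|^{-2}\mathbf{t}\otimes\mathbf{t}+\cos\varphi(\mathbf{I}-|\mathbf{t}|^{-2}\mathbf{t}\otimes\mathbf{t})+|\mathbf{t}|^{-1}\sin\varphi(\mathbf{t}\times)$.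 Set $\mathbf{t}_2^d(\gamma):=\mathbf{R}_{\mathbf{t}_1^r}(\gamma)\mathbf{t}_2^r$, $\mathbf{t}_3^d(\theta):=\mathbf{R}_{\mathbf{t}_4^r}(\theta)\mathbf{t}_3^r$. $(\theta^-,\theta^+)$ is the maximal open interval containing $0$ on which there is a unique $C^1$ function $\gamma$ with $\gamma(0)=0$, $\mathbf{t}_2^d(\gamma(\theta))\cdot\mathbf{t}_3^d(\theta)=\mathbf{t}_2^r\cdot\mathbf{t}_3^r$ and with the four triple products of $(\mathbf{t}_1^r,\mathbf{t}_2^d(\gamma(\theta)),\mathbf{t}_3^d(\theta),\mathbf{t}_4^r)$ indexed by $ijk\in\{123,234,341,412\}$ having the same signs as those of $(\mathbf{t}_1^r,\dots,\mathbf{t}_4^r)$; $\gamma$ is analytic. Fix an analytic $\mathbf{R}_0:(\theta^-,\theta^+)\to SO(3)$ with $\mathbf{R}_0(0)=\mathbf{I}$ such that $\mathbf{t}_1(\theta):=\mathbf{R}_0(\theta)\mathbf{t}_1^r$, $\mathbf{t}_2(\theta):=\mathbf{R}_0(\theta)\mathbf{t}_2^d(\gamma(\theta))$, $\mathbf{t}_3(\theta):=\mathbf{R}_0(\theta)\mathbf{t}_3^d(\theta)$, $\mathbf{t}_4(\theta):=\mathbf{R}_0(\theta)\mathbf{t}_4^r$ give $\mathbf{u}(\theta):=\mathbf{t}_1(\theta)-\mathbf{t}_3(\theta)$, $\mathbf{v}(\theta):=\mathbf{t}_2(\theta)-\mathbf{t}_4(\theta)$ with $\mathbf{e}_3\cdot\mathbf{u}=\mathbf{e}_3\cdot\mathbf{v}=0$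 and $\mathbf{e}_3\cdot(\mathbf{u}\times\mathbf{v})>0$. Primes denote $d/d\theta$. *)

theory Defs
  imports "HOL-Analysis.Analysis"
begin

definition triple :: "real^3 \<Rightarrow> real^3 \<Rightarrow> real^3 \<Rightarrow> real" where
  "triple a b c = a \<bullet> cross3 b c"

definition rot :: "real^3 \<Rightarrow> real \<Rightarrow> real^3 \<Rightarrow> real^3" where
  "rot t \<phi> x = ((t \<bullet> x) / (norm t)^2) *\<^sub>R t
      + cos \<phi> *\<^sub>R (x - ((t \<bullet> x) / (norm t)^2) *\<^sub>R t)
      + (sin \<phi> / norm t) *\<^sub>R cross3 t x"

definition same_signs :: "real^3 \<Rightarrow> real^3 \<Rightarrow> real^3 \<Rightarrow> real^3 \<Rightarrow>
    real^3 \<Rightarrow> real^3 \<Rightarrow> real^3 \<Rightarrow> real^3 \<Rightarrow> bool" where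
  "same_signs a1 a2 a3 a4 b1 b2 b3 b4 \<longleftrightarrow>
     sgn (triple a1 a2 a3) = sgn (triple b1 b2 b3) \<and>
     sgn (triple a2 a3 a4) = sgn (triple b2 b3 b4) \<and>
     sgn (triple a3 a4 a1) = sgn (triple b3 b4 b1) \<and>
     sgn (triple a4 a1 a2) = sgn (triple b4 b1 b2)"

definition gamma_ok :: "real^3 \<Rightarrow> real^3 \<Rightarrow> real^3 \<Rightarrow> real^3 \<Rightarrow> real set \<Rightarrow> (real \<Rightarrow> real) \<Rightarrow> bool" where
  "gamma_ok t1 t2 t3 t4 I g \<longleftrightarrow>
     g C1_differentiable_on I \<and> g 0 = 0 \<and>
     (\<forall>\<theta>\<in>I. rot t1 (g \<theta>) t2 \<bullet> rot t4 \<theta> t3 = t2 \<bullet> t3 \<and>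
              same_signs t1 (rot t1 (g \<theta>) t2) (rot t4 \<theta> t3) t4 t1 t2 t3 t4)"

definition valid_interval :: "real^3 \<Rightarrow> real^3 \<Rightarrow> real^3 \<Rightarrow> real^3 \<Rightarrow> real set \<Rightarrow> bool" where
  "valid_interval t1 t2 t3 t4 I \<longleftrightarrow>
     is_interval I \<and> open I \<and> 0 \<in> I \<and>
     (\<exists>g. gamma_ok t1 t2 t3 t4 I g \<and>
          (\<forall>h. gamma_ok t1 t2 t3 t4 I h \<longrightarrow> (\<forall>\<theta>\<in>I. h \<theta> = g \<theta>)))"

definition maximal_interval :: "real^3 \<Rightarrow> real^3 \<Rightarrow> real^3 \<Rightarrow> real^3 \<Rightarrow> real set \<Rightarrow> bool" where
  "maximal_interval t1 t2 t3 t4 I \<longleftrightarrow>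
     valid_interval t1 t2 t3 t4 I \<and>
     (\<forall>J. valid_interval t1 t2 t3 t4 J \<longrightarrow> J \<subseteq> I)"

definition real_analytic_on :: "(real \<Rightarrow> 'a::real_normed_vector) \<Rightarrow> real set \<Rightarrow> bool" where
  "real_analytic_on f S \<longleftrightarrow>
     (\<forall>x\<in>S. \<exists>r>0. \<exists>c::nat \<Rightarrow> 'a. \<forall>y. \<bar>y - x\<bar> < r \<longrightarrow>
        (\<lambda>n. ((y - x) ^ n) *\<^sub>R c n) sums f y)"

definition SO3 :: "(real^3^3) set" where
  "SO3 = {R. orthogonal_matrix R \<and> det R = 1}"

definition e3 :: "real^3" where
  "e3 = axis 3 1"

end

theory Submission
  imports Defs
begin


lemma so3_inner: "R \<in> SO3 \<Longrightarrow> (R *v x) \<bullet> (R *v y) = x \<bullet> y"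
proof -
  assume "R \<in> SO3"
  then have "orthogonal_matrix R" by (simp add: SO3_def)
  then have "orthogonal_transformation (\<lambda>x. R *v x)"
    by (simp add: orthogonal_transformation_matrix matrix_vector_mul_linear)
  then show ?thesis by (simp add: orthogonal_transformation_def)
qed

lemma bb_mv: "bounded_bilinear (\<lambda>(A::real^'n^'m) x. A *v x)"
  unfolding bilinear_conv_bounded_bilinear[symmetric] bilinear_def
  by (auto simp: linear_iff algebra_simps scaleR_matrix_vector_assoc)

lemma analytic_diff:
  fixes f :: "real \<Rightarrow> 'a::euclidean_space"
  assumes "real_analytic_on f S" "x \<in> S"
  shows "f differentiable (at x)"
proof -
  have "\<exists>r>0. \<exists>c::nat \<Rightarrow> 'a. \<forall>y. \<bar>y - x\<bar> < r \<longrightarrow> (\<lambda>n. ((y - x) ^ n) *\<^sub>R c n) sums f y"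
    using assms(1) assms(2) unfolding real_analytic_on_def by (rule bspec)
  then obtain r c where r: "r > 0" and s0: "\<forall>y. \<bar>y - x\<bar> < r \<longrightarrow> (\<lambda>n. ((y - x) ^ n) *\<^sub>R c n) sums f y"
    by (elim exE conjE)
  have s: "\<And>y. \<bar>y - x\<bar> < r \<Longrightarrow> (\<lambda>n. ((y - x) ^ n) *\<^sub>R c n) sums f y"
    by (rule s0[rule_format])
  show ?thesis
  proof (rule differentiable_componentwise_within[where S=UNIV, THEN iffD2], rule ballI)
    fix i :: 'a assume "i \<in> Basis"
    define a where "a n = c n \<bullet> i" for n
    have si: "(\<lambda>n. a n * (y - x) ^ n) sums (f y \<bullet> i)" if "\<bar>y - x\<bar> < r" for y
      using bounded_linear.sums[OF bounded_linear_inner_left[of i] s[OF that]]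
      by (simp add: a_def mult.commute)
    define g where "g h = (\<Sum>n. a n * h ^ n)" for h
    have "summable (\<lambda>n. a n * (r/2) ^ n)"
      using si[of "x + r/2"] r by (auto simp: sums_iff)
    then have "DERIV g 0 :> (\<Sum>n. diffs a n * 0^n)"
      unfolding g_def by (rule termdiffs_strong) (use r in auto)
    then have dg: "DERIV g (x - x) :> (\<Sum>n. diffs a n * 0^n)" by simp
    have ds: "DERIV (\<lambda>y. y - x) x :> 1" by (rule derivative_eq_intros refl)+ simp
    have d0: "DERIV (\<lambda>y. g (y - x)) x :> (\<Sum>n. diffs a n * 0^n) * 1"
      by (rule DERIV_chain2[OF dg ds])
    have eq: "\<And>y. y \<in> ball x r \<Longrightarrow> g (y - x) = f y \<bullet> i"
      using si by (auto simp: g_def sums_iff dist_real_def abs_minus_commute)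
    have "DERIV (\<lambda>y. f y \<bullet> i) x :> (\<Sum>n. diffs a n * 0^n) * 1"
      by (rule has_field_derivative_transform_within_open[OF d0 open_ball]) (use r eq in auto)
    then show "(\<lambda>y. f y \<bullet> i) differentiable (at x within UNIV)"
      using real_differentiable_def differentiableI by blast
  qed
qed



lemma cross_cross3: "cross3 a (cross3 a x) = (a \<bullet> x) *\<^sub>R a - (a \<bullet> a) *\<^sub>R x"
  by (simp add: cross3_simps) (auto simp: forall_3)

lemma rot_deriv:
  assumes t: "t \<noteq> 0"
  shows "((\<lambda>\<phi>. rot t \<phi> x) has_vector_derivative (cross3 t (rot t \<phi> x) /\<^sub>R norm t)) (at \<phi>)"
proof -
  let ?B = "x - ((t \<bullet> x) / (norm t)^2) *\<^sub>R t"
  have d: "((\<lambda>\<phi>. rot t \<phi> x) has_vector_derivative ((- sin \<phi>) *\<^sub>R ?B + (cos \<phi> / norm t) *\<^sub>R cross3 t x)) (at \<phi>)"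
    unfolding rot_def
    using t by (auto intro!: derivative_eq_intros)
  have nt: "norm t \<noteq> 0" "t \<bullet> t = (norm t)^2" using t by (auto simp: power2_norm_eq_inner)
  have cz: "cross3 t (x - c *\<^sub>R t) = cross3 t x" for c by (simp add: cross3_simps)
  have "cross3 t (rot t \<phi> x) = cos \<phi> *\<^sub>R cross3 t x + (sin \<phi> / norm t) *\<^sub>R cross3 t (cross3 t x)"
    unfolding rot_def by (simp add: cross_add_right cross_mult_right cz)
  also have "\<dots> = norm t *\<^sub>R ((- sin \<phi>) *\<^sub>R ?B + (cos \<phi> / norm t) *\<^sub>R cross3 t x)"
    unfolding cross_cross3 using nt
    by (simp add: algebra_simps power2_eq_square)
  finally show ?thesis using d nt by simp
qed

lemma triple_cyc: "triple a b c = triple b c a" "triple a b c = - triple a c b"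
  by (simp_all add: triple_def cross3_simps)



lemma udot:
  fixes R0 :: "real \<Rightarrow> real^3^3" and f :: "real \<Rightarrow> real^3"
  assumes I: "open I" "\<theta> \<in> I" and so: "\<forall>s\<in>I. R0 s \<in> SO3"
    and R0d: "R0 differentiable (at \<theta>)"
    and fd: "(f has_vector_derivative f') (at \<theta>)"
  shows "vector_derivative (\<lambda>s. R0 s *v f s) (at \<theta>) \<bullet> (R0 \<theta> *v f \<theta>) = f' \<bullet> f \<theta>"
proof -
  define U where "U s = R0 s *v f s" for s
  obtain R' where R': "(R0 has_vector_derivative R') (at \<theta>)"
    using R0d vector_derivative_works by blast
  define U' where "U' = R0 \<theta> *v f' + R' *v f \<theta>"
  have Ud: "(U has_vector_derivative U') (at \<theta>)"
    unfolding U_def U'_def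
    using bounded_bilinear.has_vector_derivative[OF bb_mv R' fd] .
  have d1: "((\<lambda>s. U s \<bullet> U s) has_vector_derivative (U \<theta> \<bullet> U' + U' \<bullet> U \<theta>)) (at \<theta>)"
    using bounded_bilinear.has_vector_derivative[OF bounded_bilinear_inner Ud Ud] .
  have d2: "((\<lambda>s. f s \<bullet> f s) has_vector_derivative (f \<theta> \<bullet> f' + f' \<bullet> f \<theta>)) (at \<theta>)"
    using bounded_bilinear.has_vector_derivative[OF bounded_bilinear_inner fd fd] .
  have "((\<lambda>s. f s \<bullet> f s) has_vector_derivative (U \<theta> \<bullet> U' + U' \<bullet> U \<theta>)) (at \<theta>)"
    by (rule has_vector_derivative_transform_within_open[OF d1 I]) (use so so3_inner in \<open>auto simp: U_def\<close>)
  then have "U \<theta> \<bullet> U' + U' \<bullet> U \<theta> = f \<theta> \<bullet> f' + f' \<bullet> f \<theta>"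
    using d2 vector_derivative_unique_at by blast
  moreover have "vector_derivative U (at \<theta>) = U'" using Ud vector_derivative_at by blast
  ultimately show ?thesis unfolding U_def[symmetric] by (simp add: inner_commute)
qed

lemma idA: "(- (k *\<^sub>R cross3 a b)) \<bullet> (c - b) = k * triple b a c"
  by (simp add: triple_def cross3_def inner_vec_def sum_3 algebra_simps)
lemma idB: "(g *\<^sub>R (k *\<^sub>R cross3 a b)) \<bullet> (b - d) = - g * k * triple d a b"
  by (simp add: triple_def cross3_def inner_vec_def sum_3 algebra_simps)
lemma idC: "(g *\<^sub>R (k *\<^sub>R cross3 a b)) \<bullet> c + b \<bullet> (k4 *\<^sub>R cross3 d c) = g*k*triple a b c - k4 * triple b c d"
  by (simp add: triple_def cross3_def inner_vec_def sum_3 algebra_simps)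



lemma mono_deriv:
  fixes F F' G :: "real \<Rightarrow> real"
  assumes iv: "is_interval I" and d: "\<forall>s\<in>I. DERIV F s :> F' s"
    and G: "\<forall>s\<in>I. G s = sqrt (F s)"
  shows "(\<forall>s\<in>I. F' s > 0) \<Longrightarrow> strict_mono_on I G"
    and "(\<forall>s\<in>I. F' s < 0) \<Longrightarrow> strict_antimono_on I G"
proof -
  have sub: "y \<in> I" if "a \<in> I" "b \<in> I" "a \<le> y" "y \<le> b" for a b y
    using iv that unfolding is_interval_1 by blast
  show "strict_mono_on I G" if p: "\<forall>s\<in>I. F' s > 0"
  proof (rule strict_mono_onI)
    fix r s assume rs: "r \<in> I" "s \<in> I" "r < s"
    have "F r < F s"
    proof (rule DERIV_pos_imp_increasing[OF rs(3)])
      fix z assume "r \<le> z" "z \<le> s"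
      then have z: "z \<in> I" using sub rs by blast
      show "\<exists>y. DERIV F z :> y \<and> y > 0"
        using d[rule_format, OF z] p[rule_format, OF z] by blast
    qed
    then show "G r < G s" using G rs by simp
  qed
  show "strict_antimono_on I G" if p: "\<forall>s\<in>I. F' s < 0"
  proof (rule monotone_onI)
    fix r s assume rs: "r \<in> I" "s \<in> I" "r < s"
    have "F r > F s"
    proof (rule DERIV_neg_imp_decreasing[OF rs(3)])
      fix z assume "r \<le> z" "z \<le> s"
      then have z: "z \<in> I" using sub rs by blast
      show "\<exists>y. DERIV F z :> y \<and> y < 0"
        using d[rule_format, OF z] p[rule_format, OF z] by blast
    qed
    then show "G r > G s" using G rs by simp
  qed
qed



theorem mainTheorem5:
  fixes t1r t2r t3r t4r :: "real^3"
    and I :: "real set"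
    and \<gamma> :: "real \<Rightarrow> real"
    and R0 :: "real \<Rightarrow> real^3^3"
    and u v :: "real \<Rightarrow> real^3"
  assumes nz123: "triple t1r t2r t3r \<noteq> 0"
    and nz234: "triple t2r t3r t4r \<noteq> 0"
    and nz341: "triple t3r t4r t1r \<noteq> 0"
    and nz412: "triple t4r t1r t2r \<noteq> 0"
    and conv1: "convex hull {0, t1r, t2r} \<inter> convex hull {0, t3r, t4r} = {0}"
    and conv2: "convex hull {0, t1r, t4r} \<inter> convex hull {0, t2r, t3r} = {0}"
    and u0: "(t1r - t3r) \<bullet> e3 = 0"
    and v0: "(t2r - t4r) \<bullet> e3 = 0"
    and uv0: "e3 \<bullet> cross3 (t1r - t3r) (t2r - t4r) > 0"
    and I_max: "maximal_interval t1r t2r t3r t4r I"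
    and \<gamma>_ok: "gamma_ok t1r t2r t3r t4r I \<gamma>"
    and R0_an: "real_analytic_on R0 I"
    and R0_SO3: "\<forall>\<theta>\<in>I. R0 \<theta> \<in> SO3"
    and R0_0: "R0 0 = mat 1"
    and u_def: "u = (\<lambda>\<theta>. R0 \<theta> *v t1r - R0 \<theta> *v rot t4r \<theta> t3r)"
    and v_def: "v = (\<lambda>\<theta>. R0 \<theta> *v rot t1r (\<gamma> \<theta>) t2r - R0 \<theta> *v t4r)"
    and u_plane: "\<forall>\<theta>\<in>I. e3 \<bullet> u \<theta> = 0"
    and v_plane: "\<forall>\<theta>\<in>I. e3 \<bullet> v \<theta> = 0"
    and uv_pos: "\<forall>\<theta>\<in>I. e3 \<bullet> cross3 (u \<theta>) (v \<theta>) > 0"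
  shows "((\<forall>\<theta>\<in>I. vector_derivative u (at \<theta>) \<bullet> u \<theta> > 0) \<or>
          (\<forall>\<theta>\<in>I. vector_derivative u (at \<theta>) \<bullet> u \<theta> < 0)) \<and>
         ((\<forall>\<theta>\<in>I. vector_derivative v (at \<theta>) \<bullet> v \<theta> > 0) \<or>
          (\<forall>\<theta>\<in>I. vector_derivative v (at \<theta>) \<bullet> v \<theta> < 0)) \<and>
         (strict_mono_on I (\<lambda>\<theta>. norm (u \<theta>)) \<or> strict_antimono_on I (\<lambda>\<theta>. norm (u \<theta>))) \<and>
         (strict_mono_on I (\<lambda>\<theta>. norm (v \<theta>)) \<or> strict_antimono_on I (\<lambda>\<theta>. norm (v \<theta>)))"
proof -
  have vI: "valid_interval t1r t2r t3r t4r I"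
    using I_max unfolding maximal_interval_def by (rule conjunct1)
  have iv: "is_interval I" using vI unfolding valid_interval_def by (rule conjunct1)
  have op: "open I" using vI unfolding valid_interval_def by (elim conjE)
  have t1: "t1r \<noteq> 0" and t4: "t4r \<noteq> 0"
    using nz412 by (auto simp: triple_def)
  define n1 where "n1 = norm t1r"
  define n4 where "n4 = norm t4r"
  have n1: "n1 > 0" and n4: "n4 > 0" using t1 t4 by (auto simp: n1_def n4_def)
  obtain Dg where Dg: "\<And>s. s \<in> I \<Longrightarrow> (\<gamma> has_vector_derivative Dg s) (at s)"
    using \<gamma>_ok unfolding gamma_ok_def C1_differentiable_on_def by blast
  define t3d where "t3d s = rot t4r s t3r" for s
  define t2d where "t2d s = rot t1r (\<gamma> s) t2r" for s
  define w where "w s = t1r - t3d s" for s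
  define x where "x s = t2d s - t4r" for s
  define w' where "w' s = - ((1/n4) *\<^sub>R cross3 t4r (t3d s))" for s
  define x' where "x' s = Dg s *\<^sub>R ((1/n1) *\<^sub>R cross3 t1r (t2d s))" for s
  have t3dd: "(t3d has_vector_derivative ((1/n4) *\<^sub>R cross3 t4r (t3d s))) (at s)" for s
    unfolding t3d_def n4_def using rot_deriv[OF t4, of t3r s] by (simp add: divide_inverse_commute)
  have wd: "(w has_vector_derivative w' s) (at s)" for s
    unfolding w_def w'_def by (auto intro!: derivative_eq_intros t3dd)
  have t2dd: "(t2d has_vector_derivative x' s) (at s)" if "s \<in> I" for s
  proof -
    have "((\<lambda>\<phi>. rot t1r \<phi> t2r) \<circ> \<gamma> has_vector_derivative Dg s *\<^sub>R (cross3 t1r (rot t1r (\<gamma> s) t2r) /\<^sub>R norm t1r)) (at s)"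
      by (rule vector_diff_chain_at[OF Dg[OF that] rot_deriv[OF t1]])
    then show ?thesis unfolding t2d_def[abs_def] x'_def n1_def by (simp add: o_def divide_inverse_commute)
  qed
  have xd: "(x has_vector_derivative x' s) (at s)" if "s \<in> I" for s
    unfolding x_def using t2dd[OF that] by (auto intro!: derivative_eq_intros)
  have ss: "same_signs t1r (t2d s) (t3d s) t4r t1r t2r t3r t4r" and cst: "t2d s \<bullet> t3d s = t2r \<bullet> t3r"
    if "s \<in> I" for s
    using \<gamma>_ok that unfolding gamma_ok_def t2d_def t3d_def by auto
  have uw: "u s = R0 s *v w s" and vx: "v s = R0 s *v x s" for s
    by (simp_all add: u_def v_def w_def x_def t3d_def t2d_def matrix_vector_mult_diff_distrib)
  have R0d: "R0 differentiable (at s)" if "s \<in> I" for s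
    using analytic_diff[OF R0_an that] .
  define D0 where "D0 = triple t3r t4r t1r"
  have U: "vector_derivative u (at s) \<bullet> u s = w' s \<bullet> w s \<and> (D0 > 0 \<longrightarrow> w' s \<bullet> w s > 0) \<and> (D0 < 0 \<longrightarrow> w' s \<bullet> w s < 0)"
    if "s \<in> I" for s
  proof -
    have "vector_derivative u (at s) \<bullet> u s = w' s \<bullet> w s"
      unfolding uw[abs_def] using udot[OF op that R0_SO3 R0d[OF that] wd] by simp
    moreover have "w' s \<bullet> w s = (1/n4) * triple (t3d s) t4r t1r"
      unfolding w'_def w_def by (rule idA)
    moreover have "sgn (triple (t3d s) t4r t1r) = sgn D0"
      using ss[OF that] by (simp add: same_signs_def D0_def)
    ultimately show ?thesis using n4 by (auto simp: sgn_if divide_neg_pos split: if_splits)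
  qed
  define PP where "PP = triple t2r t3r t4r * triple t4r t1r t2r * triple t1r t2r t3r"
  have V: "vector_derivative v (at s) \<bullet> v s = x' s \<bullet> x s \<and> (PP < 0 \<longrightarrow> x' s \<bullet> x s > 0) \<and> (PP > 0 \<longrightarrow> x' s \<bullet> x s < 0)"
    if "s \<in> I" for s
  proof -
    have "vector_derivative v (at s) \<bullet> v s = x' s \<bullet> x s"
      unfolding vx[abs_def] using udot[OF op that R0_SO3 R0d[OF that] xd[OF that]] by simp
    moreover have xx: "x' s \<bullet> x s = - Dg s * (1/n1) * triple t4r t1r (t2d s)"
      unfolding x'_def x_def by (rule idB)
    moreover have "t2d s \<bullet> (1/n4) *\<^sub>R cross3 t4r (t3d s) + x' s \<bullet> t3d s = 0"
    proof -
      have h: "((\<lambda>s. t2d s \<bullet> t3d s) has_vector_derivative (t2d s \<bullet> (1/n4) *\<^sub>R cross3 t4r (t3d s) + x' s \<bullet> t3d s)) (at s)"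
        using bounded_bilinear.has_vector_derivative[OF bounded_bilinear_inner t2dd[OF that] t3dd] .
      have "((\<lambda>s. t2d s \<bullet> t3d s) has_vector_derivative 0) (at s)"
        by (rule has_vector_derivative_transform_within_open[of "\<lambda>_. t2r \<bullet> t3r", OF _ op that])
           (auto simp: cst)
      then show ?thesis using h vector_derivative_unique_at by blast
    qed
    then have "Dg s * (1/n1) * triple t1r (t2d s) (t3d s) - (1/n4) * triple (t2d s) (t3d s) t4r = 0"
      using idC[of "Dg s" "1/n1" t1r "t2d s" "t3d s" "1/n4" t4r] unfolding x'_def
      by (simp add: inner_commute algebra_simps)
    moreover have "sgn (triple t1r (t2d s) (t3d s)) = sgn (triple t1r t2r t3r)"
      "sgn (triple (t2d s) (t3d s) t4r) = sgn (triple t2r t3r t4r)"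
      "sgn (triple t4r t1r (t2d s)) = sgn (triple t4r t1r t2r)"
      using ss[OF that] by (simp_all add: same_signs_def)
    ultimately show ?thesis
    proof (intro conjI impI)
      assume e1: "vector_derivative v (at s) \<bullet> v s = x' s \<bullet> x s"
        and e2: "x' s \<bullet> x s = - Dg s * (1/n1) * triple t4r t1r (t2d s)"
        and e3: "Dg s * (1/n1) * triple t1r (t2d s) (t3d s) - (1/n4) * triple (t2d s) (t3d s) t4r = 0"
        and sA: "sgn (triple t1r (t2d s) (t3d s)) = sgn (triple t1r t2r t3r)"
        and sB: "sgn (triple (t2d s) (t3d s) t4r) = sgn (triple t2r t3r t4r)"
        and sC: "sgn (triple t4r t1r (t2d s)) = sgn (triple t4r t1r t2r)"
      show "vector_derivative v (at s) \<bullet> v s = x' s \<bullet> x s" using e1 .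
      define A where "A = triple t1r (t2d s) (t3d s)"
      define B where "B = triple (t2d s) (t3d s) t4r"
      define C where "C = triple t4r t1r (t2d s)"
      define X where "X = x' s \<bullet> x s"
      have A0: "A \<noteq> 0" using sA nz123 unfolding A_def by (metis sgn_0_0)
      have AA: "A * A > 0" using A0 by (auto simp: zero_less_mult_iff linorder_neq_iff)
      have k: "X * (A * A) = - (B * C * A) / n4"
      proof -
        have e3': "Dg s * (1/n1) * A = (1/n4) * B" using e3 unfolding A_def B_def by linarith
        have "X * A = - ((Dg s * (1/n1) * A) * C)" unfolding X_def e2 C_def by (simp add: algebra_simps)
        also have "\<dots> = - ((1/n4) * B * C)" by (simp only: e3')
        finally have "X * A * A = - ((1/n4) * B * C) * A" by simp
        then show ?thesis by (simp add: mult_ac)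
      qed
      have sP: "sgn (B * C * A) = sgn PP"
        using sA sB sC unfolding PP_def A_def B_def C_def by (simp add: sgn_mult)
      show "PP < 0 \<Longrightarrow> 0 < x' s \<bullet> x s"
      proof -
        assume "PP < 0"
        then have "B * C * A < 0" using sP by (metis sgn_less)
        then have "X * (A * A) > 0" using k n4 by (simp add: divide_neg_pos)
        then show ?thesis using AA unfolding X_def by (simp add: zero_less_mult_iff)
      qed
      show "PP > 0 \<Longrightarrow> x' s \<bullet> x s < 0"
      proof -
        assume "PP > 0"
        then have "B * C * A > 0" using sP by (metis sgn_greater)
        then have "X * (A * A) < 0" using k n4 by simp
        then show ?thesis using AA unfolding X_def by (simp add: mult_less_0_iff)
      qed
    qed
  qed
  have Fw: "DERIV (\<lambda>s. w s \<bullet> w s) s :> 2 * (w' s \<bullet> w s)" for s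
  proof -
    have "((\<lambda>s. w s \<bullet> w s) has_vector_derivative (w s \<bullet> w' s + w' s \<bullet> w s)) (at s)"
      using bounded_bilinear.has_vector_derivative[OF bounded_bilinear_inner wd wd] .
    then show ?thesis by (simp add: has_real_derivative_iff_has_vector_derivative inner_commute)
  qed
  have Fx: "DERIV (\<lambda>s. x s \<bullet> x s) s :> 2 * (x' s \<bullet> x s)" if "s \<in> I" for s
  proof -
    have "((\<lambda>s. x s \<bullet> x s) has_vector_derivative (x s \<bullet> x' s + x' s \<bullet> x s)) (at s)"
      using bounded_bilinear.has_vector_derivative[OF bounded_bilinear_inner xd[OF that] xd[OF that]] .
    then show ?thesis by (simp add: has_real_derivative_iff_has_vector_derivative inner_commute)
  qed
  have Gu: "\<forall>s\<in>I. norm (u s) = sqrt (w s \<bullet> w s)"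
  proof
    fix s assume "s \<in> I"
    then have "R0 s \<in> SO3" using R0_SO3 by blast
    show "norm (u s) = sqrt (w s \<bullet> w s)"
      unfolding uw norm_eq_sqrt_inner so3_inner[OF \<open>R0 s \<in> SO3\<close>] by (rule refl)
  qed
  have Gv: "\<forall>s\<in>I. norm (v s) = sqrt (x s \<bullet> x s)"
  proof
    fix s assume "s \<in> I"
    then have "R0 s \<in> SO3" using R0_SO3 by blast
    show "norm (v s) = sqrt (x s \<bullet> x s)"
      unfolding vx norm_eq_sqrt_inner so3_inner[OF \<open>R0 s \<in> SO3\<close>] by (rule refl)
  qed
  have D0: "D0 \<noteq> 0" using nz341 by (simp add: D0_def)
  have PP: "PP \<noteq> 0" using nz123 nz234 nz412 by (simp add: PP_def)
  have PU: "((\<forall>\<theta>\<in>I. vector_derivative u (at \<theta>) \<bullet> u \<theta> > 0) \<or>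
          (\<forall>\<theta>\<in>I. vector_derivative u (at \<theta>) \<bullet> u \<theta> < 0)) \<and>
         (strict_mono_on I (\<lambda>\<theta>. norm (u \<theta>)) \<or> strict_antimono_on I (\<lambda>\<theta>. norm (u \<theta>)))"
  proof (cases "D0 > 0")
    case True
    have pos: "\<forall>s\<in>I. 2 * (w' s \<bullet> w s) > 0" using U True by auto
    have "strict_mono_on I (\<lambda>\<theta>. norm (u \<theta>))"
      by (rule mono_deriv(1)[OF iv _ Gu pos]) (use Fw in auto)
    then show ?thesis using U True \<open>strict_mono_on I (\<lambda>\<theta>. norm (u \<theta>))\<close> by auto
  next
    case False
    then have F: "D0 < 0" using D0 by linarith
    have pos: "\<forall>s\<in>I. 2 * (w' s \<bullet> w s) < 0" using U F by auto
    have "strict_antimono_on I (\<lambda>\<theta>. norm (u \<theta>))"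
      by (rule mono_deriv(2)[OF iv _ Gu pos]) (use Fw in auto)
    then show ?thesis using U F by auto
  qed
  have PV: "((\<forall>\<theta>\<in>I. vector_derivative v (at \<theta>) \<bullet> v \<theta> > 0) \<or>
          (\<forall>\<theta>\<in>I. vector_derivative v (at \<theta>) \<bullet> v \<theta> < 0)) \<and>
         (strict_mono_on I (\<lambda>\<theta>. norm (v \<theta>)) \<or> strict_antimono_on I (\<lambda>\<theta>. norm (v \<theta>)))"
  proof (cases "PP < 0")
    case True
    have pos: "\<forall>s\<in>I. 2 * (x' s \<bullet> x s) > 0" using V True by auto
    have "strict_mono_on I (\<lambda>\<theta>. norm (v \<theta>))"
      by (rule mono_deriv(1)[OF iv _ Gv pos]) (use Fx in auto)
    then show ?thesis using V True by auto
  next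
    case False
    then have F: "PP > 0" using PP by linarith
    have pos: "\<forall>s\<in>I. 2 * (x' s \<bullet> x s) < 0" using V F by auto
    have "strict_antimono_on I (\<lambda>\<theta>. norm (v \<theta>))"
      by (rule mono_deriv(2)[OF iv _ Gv pos]) (use Fx in auto)
    then show ?thesis using V F by auto
  qed
  show ?thesis
    by (intro conjI; (rule PU[THEN conjunct1] PV[THEN conjunct1] PU[THEN conjunct2] PV[THEN conjunct2])?)
qed

end
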